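(* If $G$ is a connected $P_4$-free graph and $G\neq K_2$, then $\gamma(G)=\gamma_{\rm cer}(G)$.
   Context: All graphs are finite and simple. A graph is $P_4$-free if it has no induced subgraph isomorphic to the path $P_4$ on four vertices. A set $D\subseteq V_G$ is a dominating set of $G$ if every vertex of $V_G-D$ has a neighbor in $D$; $\gamma(G)$ is the minimum cardinality of a dominating set. A set $D\subseteq V_G$ is a certified dominating set of $G$ if $D$ is a dominating set of $G$ and every vertex of $D$ has either zero or at least two neighbors in $V_G-D$; $\gamma_{\rm cer}(G)$ is the minimum cardinality of a certified dominating set of $G$. *)

theory Defs
  imports Main
begin

definition simple_graph :: "'a set \<Rightarrow> ('a \<Rightarrow> 'a \<Rightarrow> bool) \<Rightarrow> bool" where
  "simple_graph V E \<longleftrightarrow> finite V \<and> (\<forall>x y. E x y \<longrightarrow> x \<in> V \<and> y \<in> V)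
     \<and> (\<forall>x y. E x y \<longrightarrow> E y x) \<and> (\<forall>x. \<not> E x x)"

definition connected_graph :: "'a set \<Rightarrow> ('a \<Rightarrow> 'a \<Rightarrow> bool) \<Rightarrow> bool" where
  "connected_graph V E \<longleftrightarrow> V \<noteq> {} \<and> (\<forall>x\<in>V. \<forall>y\<in>V. (E\<^sup>*\<^sup>*) x y)"

definition is_K2 :: "'a set \<Rightarrow> ('a \<Rightarrow> 'a \<Rightarrow> bool) \<Rightarrow> bool" where
  "is_K2 V E \<longleftrightarrow> (\<exists>u v. u \<noteq> v \<and> V = {u, v} \<and> E u v)"

definition P4_free :: "'a set \<Rightarrow> ('a \<Rightarrow> 'a \<Rightarrow> bool) \<Rightarrow> bool" where
  "P4_free V E \<longleftrightarrow> \<not> (\<exists>a\<in>V. \<exists>b\<in>V. \<exists>c\<in>V. \<exists>d\<in>V. distinct [a, b, c, d]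
      \<and> E a b \<and> E b c \<and> E c d \<and> \<not> E a c \<and> \<not> E a d \<and> \<not> E b d)"

definition dominating_set :: "'a set \<Rightarrow> ('a \<Rightarrow> 'a \<Rightarrow> bool) \<Rightarrow> 'a set \<Rightarrow> bool" where
  "dominating_set V E D \<longleftrightarrow> D \<subseteq> V \<and> (\<forall>v\<in>V - D. \<exists>u\<in>D. E v u)"

definition certified_dominating_set :: "'a set \<Rightarrow> ('a \<Rightarrow> 'a \<Rightarrow> bool) \<Rightarrow> 'a set \<Rightarrow> bool" where
  "certified_dominating_set V E D \<longleftrightarrow> dominating_set V E D \<and>
     (\<forall>v\<in>D. card {u \<in> V - D. E v u} = 0 \<or> card {u \<in> V - D. E v u} \<ge> 2)"

definition domination_number :: "'a set \<Rightarrow> ('a \<Rightarrow> 'a \<Rightarrow> bool) \<Rightarrow> nat" where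
  "domination_number V E = Min (card ` {D. dominating_set V E D})"

definition certified_domination_number :: "'a set \<Rightarrow> ('a \<Rightarrow> 'a \<Rightarrow> bool) \<Rightarrow> nat" where
  "certified_domination_number V E = Min (card ` {D. certified_dominating_set V E D})"

end

theory Submission
  imports Defs
begin

lemma p4:
  assumes sg: "simple_graph V E" and pf: "P4_free V E"
    and h: "E a b" "E b c" "E c d" "\<not> E a c" "\<not> E a d" "\<not> E b d"
  shows False
proof -
  have V: "a \<in> V" "b \<in> V" "c \<in> V" "d \<in> V" using sg h unfolding simple_graph_def by blast+
  have irr: "\<And>x. \<not> E x x" and sym: "\<And>x y. E x y \<Longrightarrow> E y x" using sg unfolding simple_graph_def by blast+
  have "distinct [a,b,c,d]" using h irr sym by auto
  thus False using pf V h unfolding P4_free_def by blast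
qed

lemma closed_reach:
  assumes "\<forall>x y. x \<in> S \<longrightarrow> E x y \<longrightarrow> y \<in> S" "a \<in> S" "(E\<^sup>*\<^sup>*) a z"
  shows "z \<in> S"
  using assms(3,2) by (induction rule: rtranclp_induct) (use assms(1) in blast)+

lemma dom_single: "dominating_set V E {v} \<longleftrightarrow> v \<in> V \<and> (\<forall>w\<in>V - {v}. E w v)"
  unfolding dominating_set_def by auto

lemma dom_pair:
  assumes sg: "simple_graph V E" and conn: "connected_graph V E" and pf: "P4_free V E"
    and v: "v \<in> V" and nd: "\<not> dominating_set V E {v}"
  shows "\<exists>u. u \<noteq> v \<and> u \<in> V \<and> dominating_set V E {v, u}"
proof -
  have fin: "finite V" and inV: "\<And>x y. E x y \<Longrightarrow> x \<in> V \<and> y \<in> V"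
    and sym: "\<And>x y. E x y \<Longrightarrow> E y x" and irr: "\<And>x. \<not> E x x"
    using sg unfolding simple_graph_def by blast+
  note P = p4[OF sg pf]
  define M where "M = {m\<in>V. m \<noteq> v \<and> \<not> E v m}"
  have Mne: "M \<noteq> {}" using nd v sym unfolding dom_single M_def by blast
  define S where "S = {y\<in>V. y = v \<or> E v y \<or> (\<exists>u. E v u \<and> E u y)}"
  have closed: "\<forall>x y. x \<in> S \<longrightarrow> E x y \<longrightarrow> y \<in> S"
  proof (intro allI impI)
    fix x y assume xS: "x \<in> S" and xy: "E x y"
    show "y \<in> S"
    proof (rule ccontr)
      assume yS: "y \<notin> S"
      have yV: "y \<in> V" using inV xy by blast
      from xS consider "x = v" | "E v x" | u where "E v u" "E u x" unfolding S_def by blast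
      thus False
      proof cases
        case 1 thus ?thesis using xy yS yV unfolding S_def by blast
      next
        case 2 thus ?thesis using xy yS yV unfolding S_def by blast
      next
        case 3
        have "\<not> E y u" using yS yV 3 sym unfolding S_def by blast
        moreover have "\<not> E y v" using yS yV sym unfolding S_def by blast
        moreover have "\<not> E x v" using yS yV xy sym unfolding S_def by blast
        ultimately show False using P[of y x u v] xy 3 sym by blast
      qed
    qed
  qed
  have common: "\<And>m. m \<in> M \<Longrightarrow> \<exists>u. E v u \<and> E u m"
  proof -
    fix m assume m: "m \<in> M"
    have "(E\<^sup>*\<^sup>*) v m" using conn v m unfolding connected_graph_def M_def by blast
    moreover have "v \<in> S" using v unfolding S_def by blast
    ultimately have "m \<in> S" using closed_reach[OF closed] by blast
    thus "\<exists>u. E v u \<and> E u m" using m unfolding S_def M_def by blast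
  qed
  define U where "U = {u. E v u \<and> (\<exists>m\<in>M. E u m)}"
  define f where "f u = card {m\<in>M. E u m}" for u
  have "U \<subseteq> V" unfolding U_def using inV by blast
  hence Ufin: "finite U" using fin finite_subset by blast
  have Une: "U \<noteq> {}" using Mne common unfolding U_def by blast
  have "Max (f ` U) \<in> f ` U" using Ufin Une by simp
  then obtain u where uU: "u \<in> U" and uk: "f u = Max (f ` U)" by force
  have umax: "\<And>u'. u' \<in> U \<Longrightarrow> f u' \<le> f u" unfolding uk using Ufin by simp
  have Mfin: "finite M" using fin unfolding M_def by simp
  have all: "\<forall>m'\<in>M. E u m'"
  proof (rule ccontr)
    assume "\<not> (\<forall>m'\<in>M. E u m')"
    then obtain m' where m': "m' \<in> M" "\<not> E u m'" by blast
    have vu: "E v u" using uU unfolding U_def by blast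
    have nm: "\<And>m. m \<in> M \<Longrightarrow> E u m \<Longrightarrow> \<not> E m m'"
    proof
      fix m assume "m \<in> M" "E u m" "E m m'"
      thus False using P[of m' m u v] m' vu sym unfolding M_def by blast
    qed
    obtain u' where u': "E v u'" "E u' m'" using common m' by blast
    have u'U: "u' \<in> U" using u' m' unfolding U_def by blast
    have "\<exists>m\<in>M. E u m \<and> \<not> E u' m"
    proof (rule ccontr)
      assume "\<not> (\<exists>m\<in>M. E u m \<and> \<not> E u' m)"
      hence sub: "insert m' {m\<in>M. E u m} \<subseteq> {m\<in>M. E u' m}" using m' u' by blast
      have "card (insert m' {m\<in>M. E u m}) = f u + 1" unfolding f_def using m' Mfin by simp
      moreover have "card (insert m' {m\<in>M. E u m}) \<le> f u'" unfolding f_def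
        using card_mono[OF _ sub] Mfin by simp
      ultimately show False using umax[OF u'U] by simp
    qed
    then obtain m where m: "m \<in> M" "E u m" "\<not> E u' m" by blast
    have mm': "\<not> E m m'" using nm m by blast
    show False
    proof (cases "E u u'")
      case True thus ?thesis using P[of m u u' m'] m mm' m' u' sym by blast
    next
      case False thus ?thesis using P[of m u v u'] m vu u' sym unfolding M_def by blast
    qed
  qed
  have vu: "E v u" using uU unfolding U_def by blast
  have "dominating_set V E {v, u}"
    unfolding dominating_set_def using v inV[OF vu] all sym vu unfolding M_def by blast
  moreover have "u \<noteq> v" using vu irr by blast
  ultimately show ?thesis using inV[OF vu] by blast
qed


lemma fix_bad:
  assumes sg: "simple_graph V E" and conn: "connected_graph V E" and pf: "P4_free V E"
    and nds: "\<forall>w. \<not> dominating_set V E {w}"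
    and D: "dominating_set V E {a, b}" and ab: "a \<noteq> b"
    and bad: "card {u \<in> V - {a, b}. E a u} = 1"
  shows "\<exists>D. certified_dominating_set V E D \<and> card D = 2"
proof -
  have fin: "finite V" and inV: "\<And>x y. E x y \<Longrightarrow> x \<in> V \<and> y \<in> V"
    and sym: "\<And>x y. E x y \<Longrightarrow> E y x" and irr: "\<And>x. \<not> E x x"
    using sg unfolding simple_graph_def by blast+
  note P = p4[OF sg pf]
  obtain x where xs: "{u \<in> V - {a, b}. E a u} = {x}" using bad by (auto simp: card_1_singleton_iff)
  have xin: "x \<in> {u \<in> V - {a, b}. E a u}" using xs by simp
  hence x: "x \<in> V" "x \<noteq> a" "x \<noteq> b" "E a x" by auto
  have only: "\<And>y. y \<in> V \<Longrightarrow> y \<noteq> a \<Longrightarrow> y \<noteq> b \<Longrightarrow> E a y \<Longrightarrow> y = x"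
  proof -
    fix y assume "y \<in> V" "y \<noteq> a" "y \<noteq> b" "E a y"
    hence "y \<in> {u \<in> V - {a, b}. E a u}" by simp
    thus "y = x" using xs by blast
  qed
  have abV: "a \<in> V" "b \<in> V" using D unfolding dominating_set_def by blast+
  have domab: "\<And>y. y \<in> V \<Longrightarrow> y \<noteq> a \<Longrightarrow> y \<noteq> b \<Longrightarrow> E y a \<or> E y b"
  proof -
    fix y assume "y \<in> V" "y \<noteq> a" "y \<noteq> b"
    hence "y \<in> V - {a, b}" by simp
    then obtain u where "u \<in> {a, b}" "E y u" using D unfolding dominating_set_def by blast
    thus "E y a \<or> E y b" by blast
  qed
  have rest: "\<And>y. y \<in> V \<Longrightarrow> y \<noteq> a \<Longrightarrow> y \<noteq> b \<Longrightarrow> y \<noteq> x \<Longrightarrow> E y b"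
  proof -
    fix y assume y: "y \<in> V" "y \<noteq> a" "y \<noteq> b" "y \<noteq> x"
    have "\<not> E y a" using only[OF y(1-3)] y(4) sym by blast
    thus "E y b" using domab[OF y(1-3)] by blast
  qed
  show ?thesis
  proof (cases "E a b")
    case True
    have nxb: "\<not> E x b"
    proof
      assume "E x b"
      hence "dominating_set V E {b}" unfolding dom_single using abV rest True sym by blast
      thus False using nds by blast
    qed
    have "\<exists>y. y \<in> V \<and> y \<noteq> a \<and> y \<noteq> b \<and> y \<noteq> x"
    proof (rule ccontr)
      assume "\<not> (\<exists>y. y \<in> V \<and> y \<noteq> a \<and> y \<noteq> b \<and> y \<noteq> x)"
      hence all: "\<forall>y\<in>V. y = a \<or> y = b \<or> y = x" by blast
      have "\<forall>w\<in>V - {a}. E w a"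
      proof
        fix w assume "w \<in> V - {a}"
        hence "w = b \<or> w = x" using all by blast
        thus "E w a" using True x sym by blast
      qed
      hence "dominating_set V E {a}" unfolding dom_single using abV by blast
      thus False using nds by blast
    qed
    then obtain y where y: "y \<in> V" "y \<noteq> a" "y \<noteq> b" "y \<noteq> x" by blast
    have xall: "\<And>z. z \<in> V \<Longrightarrow> z \<noteq> a \<Longrightarrow> z \<noteq> b \<Longrightarrow> z \<noteq> x \<Longrightarrow> E x z"
    proof (rule ccontr)
      fix z assume z: "z \<in> V" "z \<noteq> a" "z \<noteq> b" "z \<noteq> x" "\<not> E x z"
      have "\<not> E a z" using only z by blast
      thus False using P[of x a b z] x True rest[OF z(1-4)] sym nxb z(5) by blast
    qed
    have S1: "{u \<in> V - {x, b}. E x u} = V - {x, b}" using xall x sym by blast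
    have S2: "{u \<in> V - {x, b}. E b u} = V - {x, b}" using rest True sym by blast
    have "{a, y} \<subseteq> V - {x, b}" using y abV x ab by blast
    hence c: "card (V - {x, b}) \<ge> 2" using card_mono[of "V - {x, b}" "{a, y}"] fin y by simp
    have "certified_dominating_set V E {x, b}"
      unfolding certified_dominating_set_def dominating_set_def
      using S1 S2 c x abV rest sym by auto
    moreover have "card {x, b} = 2" using x by simp
    ultimately show ?thesis by blast
  next
    case False
    show ?thesis
    proof (cases "E b x")
      case True
      have "dominating_set V E {x}"
        unfolding dom_single
      proof (intro conjI ballI)
        show "x \<in> V" using x by blast
        fix z assume z: "z \<in> V - {x}"
        show "E z x"
        proof (rule ccontr)
          assume nz: "\<not> E z x"
          have "z \<noteq> a" using nz x sym by blast
          moreover have "z \<noteq> b" using nz True by blast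
          ultimately have "E z b" "\<not> E a z" using rest z only by blast+
          thus False using P[of a x b z] x True False sym nz by blast
        qed
      qed
      thus ?thesis using nds by blast
    next
      case nbx: False
      have anb: "\<And>y. E a y \<Longrightarrow> y = x" using only inV False irr by blast
      have xnb: "\<And>y. E x y \<Longrightarrow> y = a"
      proof (rule ccontr)
        fix y assume xy: "E x y" and ya: "y \<noteq> a"
        have yV: "y \<in> V" using inV xy by blast
        have "y \<noteq> b" using xy nbx sym by blast
        moreover have "y \<noteq> x" using xy irr by blast
        ultimately have "E y b" using rest yV ya by blast
        moreover have "\<not> E a y" using anb \<open>y \<noteq> x\<close> by blast
        ultimately show False using P[of a x y b] x xy False nbx sym by blast
      qed
      have cl: "\<forall>s t. s \<in> {a, x} \<longrightarrow> E s t \<longrightarrow> t \<in> {a, x}" using anb xnb by blast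
      have "(E\<^sup>*\<^sup>*) a b" using conn abV unfolding connected_graph_def by blast
      hence "b \<in> {a, x}" using closed_reach[OF cl] by blast
      thus ?thesis using ab x by blast
    qed
  qed
qed

lemma cert_pair:
  assumes sg: "simple_graph V E" and conn: "connected_graph V E" and pf: "P4_free V E"
    and nds: "\<forall>w. \<not> dominating_set V E {w}"
    and D: "dominating_set V E {a, b}" and ab: "a \<noteq> b"
  shows "\<exists>D. certified_dominating_set V E D \<and> card D = 2"
proof (cases "card {u \<in> V - {a, b}. E a u} = 1")
  case True thus ?thesis using fix_bad[OF assms] by blast
next
  case Fa: False
  show ?thesis
  proof (cases "card {u \<in> V - {b, a}. E b u} = 1")
    case True
    have "dominating_set V E {b, a}" using D by (simp add: insert_commute)
    thus ?thesis using fix_bad[OF sg conn pf nds _ _ True] ab by blast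
  next
    case False
    have "card {u \<in> V - {a, b}. E b u} \<noteq> 1" using False by (simp add: insert_commute)
    hence "certified_dominating_set V E {a, b}"
      unfolding certified_dominating_set_def using D Fa by auto
    thus ?thesis using ab by auto
  qed
qed


theorem theorem2p7:
  fixes V :: "'a set" and E :: "'a \<Rightarrow> 'a \<Rightarrow> bool"
  assumes "simple_graph V E"
    and "connected_graph V E"
    and "P4_free V E"
    and "\<not> is_K2 V E"
  shows "domination_number V E = certified_domination_number V E"
proof -
  note sg = assms(1) and conn = assms(2) and pf = assms(3)
  have fin: "finite V" and inV: "\<And>x y. E x y \<Longrightarrow> x \<in> V \<and> y \<in> V"
    and sym: "\<And>x y. E x y \<Longrightarrow> E y x" and irr: "\<And>x. \<not> E x x"
    using sg unfolding simple_graph_def by blast+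
  have Vne: "V \<noteq> {}" using conn unfolding connected_graph_def by blast
  define DS where "DS = {D. dominating_set V E D}"
  define CS where "CS = {D. certified_dominating_set V E D}"
  have DSfin: "finite DS" unfolding DS_def dominating_set_def using fin
    by (metis (no_types, lifting) Collect_mono Pow_def finite_Pow_iff finite_subset)
  have CSsub: "CS \<subseteq> DS" unfolding CS_def DS_def certified_dominating_set_def by blast
  have e: "\<And>v. {u \<in> V - V. E v u} = {}" by blast
  have "dominating_set V E V" by (simp add: dominating_set_def)
  moreover have "\<forall>v\<in>V. card {u \<in> V - V. E v u} = 0 \<or> 2 \<le> card {u \<in> V - V. E v u}"
    unfolding e by simp
  ultimately have VC: "V \<in> CS" unfolding CS_def certified_dominating_set_def by blast
  have le1: "Min (card ` DS) \<le> Min (card ` CS)"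
    using Min_antimono[of "card ` CS" "card ` DS"] CSsub DSfin VC by blast
  have "DS \<noteq> {}" using VC CSsub by blast
  hence "Min (card ` DS) \<in> card ` DS" using DSfin by simp
  then obtain D0 where D0: "dominating_set V E D0" "card D0 = Min (card ` DS)" unfolding DS_def by force
  have D0ne: "D0 \<noteq> {}" using D0(1) Vne unfolding dominating_set_def by blast
  have D0fin: "finite D0" using D0(1) fin finite_subset unfolding dominating_set_def by blast
  have "\<exists>D. certified_dominating_set V E D \<and> card D \<le> card D0"
  proof (cases "\<exists>w. dominating_set V E {w}")
    case True
    then obtain w where w: "dominating_set V E {w}" by blast
    hence wV: "w \<in> V" and wall: "\<forall>z\<in>V - {w}. E z w" unfolding dom_single by blast+
    have S: "{u \<in> V - {w}. E w u} = V - {w}" using wall sym by blast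
    have "card (V - {w}) \<noteq> 1"
    proof
      assume "card (V - {w}) = 1"
      then obtain z where z: "V - {w} = {z}" by (auto simp: card_1_singleton_iff)
      hence V2: "V = {w, z}" using wV by blast
      have zw: "w \<noteq> z" using z by blast
      have "E w z" using wall z sym by blast
      hence "w \<noteq> z \<and> V = {w, z} \<and> E w z" using V2 zw by simp
      hence "is_K2 V E" unfolding is_K2_def by (intro exI)
      thus False using assms(4) by simp
    qed
    hence "card {u \<in> V - {w}. E w u} = 0 \<or> card {u \<in> V - {w}. E w u} \<ge> 2"
      unfolding S by linarith
    hence "\<forall>v\<in>{w}. card {u \<in> V - {w}. E v u} = 0 \<or> card {u \<in> V - {w}. E v u} \<ge> 2"
      by simp
    hence "certified_dominating_set V E {w}"
      unfolding certified_dominating_set_def using w by blast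
    moreover have "card {w} \<le> card D0" using D0ne D0fin by (simp add: Suc_leI card_gt_0_iff)
    ultimately show ?thesis by blast
  next
    case False
    hence nds: "\<forall>w. \<not> dominating_set V E {w}" by blast
    obtain v where v: "v \<in> V" using Vne by blast
    obtain u where u: "u \<noteq> v" "dominating_set V E {v, u}"
      using dom_pair[OF sg conn pf v] nds by blast
    obtain D where D: "certified_dominating_set V E D" "card D = 2"
      using cert_pair[OF sg conn pf nds u(2)] u(1) by metis
    have "card D0 \<noteq> 1"
    proof
      assume "card D0 = 1"
      then obtain z where "D0 = {z}" by (auto simp: card_1_singleton_iff)
      thus False using nds D0(1) by blast
    qed
    moreover have "card D0 \<noteq> 0" using D0ne D0fin by simp
    ultimately have "card D0 \<ge> 2" by linarith
    thus ?thesis using D by auto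
  qed
  then obtain D where D: "certified_dominating_set V E D" "card D \<le> card D0" by blast
  have "CS \<subseteq> DS" by (rule CSsub)
  hence CSfin: "finite CS" using DSfin finite_subset by blast
  have "Min (card ` CS) \<le> card D" using D(1) CSfin unfolding CS_def by simp
  hence "Min (card ` CS) \<le> Min (card ` DS)" using D(2) D0(2) by linarith
  thus ?thesis using le1 unfolding domination_number_def certified_domination_number_def DS_def CS_def
    by linarith
qed

end
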